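(* Let $p$ be an odd prime and $m,r$ integers with $m>0$ and $r\equiv 1\bmod p$. Then for every integer $0\le x<p^m$ there is a unique integer $0\le y<p^m$ such that $\mathcal{S}_r(y)\equiv x\bmod p^m$.
   Context: For integers $s$ and $n\ge0$, $\mathcal{S}_s(n)=\sum_{i=0}^{n-1}s^i$. *)

theory Defs
  imports "HOL-Number_Theory.Number_Theory"
begin

definition S :: "int \<Rightarrow> nat \<Rightarrow> int" where
  "S s n = (\<Sum>i<n. s ^ i)"

end

theory Submission
  imports Defs
begin

lemma S_add: "S r (n + k) = S r n + r ^ n * S r k"
proof (induction k)
  case 0 then show ?case by (simp add: S_def)
next
  case (Suc k) then show ?case by (simp add: S_def power_add algebra_simps)
qed

lemma S_mult: "S r (a * b) = S r a * S (r ^ a) b"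
proof (induction b)
  case 0 then show ?case by (simp add: S_def)
next
  case (Suc b)
  have "S r (a * Suc b) = S r (a * b) + r ^ (a*b) * S r a"
    by (metis S_add mult_Suc_right add.commute)
  also have "\<dots> = S r a * (S (r ^ a) b + (r^a)^b)"
    using Suc by (simp add: algebra_simps power_mult)
  also have "\<dots> = S r a * S (r ^ a) (Suc b)" by (simp add: S_def)
  finally show ?case .
qed

lemma S_cong: assumes "[r = 1] (mod q)" shows "[S r k = int k] (mod q)"
proof -
  have "[(\<Sum>i<k. r ^ i) = (\<Sum>i<k. 1)] (mod q)"
    by (rule cong_sum) (metis assms cong_pow power_one)
  then show ?thesis by (simp add: S_def)
qed

lemma pow_cong2: "[(1 + q * t) ^ i = 1 + int i * q * t] (mod q^2)"
proof (induction i)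
  case 0 then show ?case by simp
next
  case (Suc i)
  have "[(1 + q * t) ^ Suc i = (1 + int i * q * t) * (1 + q*t)] (mod q^2)"
    using Suc by (simp add: cong_mult mult.commute)
  moreover have "(1 + int i * q * t) * (1 + q*t) = 1 + int (Suc i) * q * t + (int i * t^2) * q^2"
    by (simp add: algebra_simps power2_eq_square)
  moreover have "[1 + int (Suc i) * q * t + (int i * t^2) * q^2 = 1 + int (Suc i) * q * t] (mod q^2)"
    by (simp add: cong_iff_dvd_diff)
  ultimately show ?case by (metis cong_trans)
qed

lemma S_p: assumes "odd p" "[r = 1] (mod int p)"
  shows "[S r p = int p] (mod (int p)^2)"
proof -
  obtain t where t: "r = 1 + int p * t"
    using assms(2) by (metis cong_iff_lin cong_sym)
  have "[S r p = (\<Sum>i<p. 1 + int i * int p * t)] (mod (int p)^2)"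
    unfolding S_def t by (rule cong_sum) (rule pow_cong2)
  moreover have "(\<Sum>i<p. 1 + int i * int p * t) = int p + int p * t * (\<Sum>i<p. int i)"
    by (simp add: sum.distrib sum_distrib_left sum_distrib_right algebra_simps)
  moreover obtain q where q: "p = 2*q + 1" using assms(1) oddE by blast
  moreover have "2 * (\<Sum>i<p. int i) = int p * (int p - 1)"
    by (induction p) (auto simp: algebra_simps)
  ultimately have "(\<Sum>i<p. int i) = int p * int q" by simp
  then have "(\<Sum>i<p. 1 + int i * int p * t) = int p + (int p)^2 * (t * int q)"
    using \<open>(\<Sum>i<p. 1 + int i * int p * t) = _\<close> by (simp add: power2_eq_square algebra_simps)
  then have "[(\<Sum>i<p. 1 + int i * int p * t) = int p] (mod (int p)^2)"
    by (simp add: cong_iff_dvd_diff)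
  with \<open>[S r p = _] (mod _)\<close> show ?thesis by (metis cong_trans)
qed

lemma key:
  assumes "prime p" "odd p" "[r = 1] (mod int p)" "(int p)^j dvd S r k"
  shows "p ^ j dvd k"
  using assms(3,4)
proof (induction j arbitrary: r k)
  case 0 then show ?case by simp
next
  case (Suc j)
  have "int p dvd S r k" using Suc.prems(2) by (metis dvd_mult_left power_Suc)
  moreover have "[S r k = int k] (mod int p)" using S_cong Suc.prems(1) by blast
  ultimately have "int p dvd int k" using cong_dvd_iff by blast
  then obtain n where n: "k = p * n" by auto
  have Sp: "[S r p = int p] (mod (int p)^2)" using S_p assms(2) Suc.prems(1) by blast
  have "int p dvd S r p" using S_cong[OF Suc.prems(1), of p] cong_dvd_iff by fastforce
  then obtain u where u: "S r p = int p * u" by auto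
  have pp: "int p > 0" using assms(1) prime_gt_0_nat by simp
  have "\<not> int p dvd u"
  proof
    assume "int p dvd u"
    then obtain v where "u = int p * v" by auto
    then have "S r p = (int p)^2 * v" using u by (simp add: power2_eq_square)
    then have "(int p)^2 dvd int p" using Sp by (metis cong_dvd_iff dvd_triv_left)
    then have "int p * int p \<le> int p * 1" using pp by (simp add: power2_eq_square zdvd_imp_le)
    then have "int p \<le> 1" using pp by simp
    then show False using prime_gt_1_nat[OF assms(1)] by simp
  qed
  then have cop: "coprime (int p) u"
    using assms(1) by (simp add: prime_imp_coprime)
  have "S r k = int p * (u * S (r^p) n)" using n u S_mult by simp
  then have "int p * (int p)^j dvd int p * (u * S (r^p) n)" using Suc.prems(2) by simp
  then have "(int p)^j dvd u * S (r^p) n" using pp by simp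
  then have "(int p)^j dvd S (r^p) n"
    using cop by (simp add: coprime_dvd_mult_right_iff coprime_commute)
  moreover have "[r^p = 1] (mod int p)" using Suc.prems(1) by (metis cong_pow power_one)
  ultimately have "p^j dvd n" using Suc.IH by blast
  then show ?case using n by simp
qed

theorem lemma2p2:
  fixes p m :: nat and r :: int
  assumes "prime p" and "odd p" and "m > 0" and "[r = 1] (mod int p)"
  shows "\<forall>x::nat. x < p ^ m \<longrightarrow>
           (\<exists>!y::nat. y < p ^ m \<and> [S r y = int x] (mod int (p ^ m)))"
proof -
  define N where "N = p ^ m"
  have Npos: "N > 0" using assms(1) prime_gt_0_nat N_def by simp
  have cop: "coprime r (int p)"
    by (rule cong_imp_coprime[OF cong_sym[OF assms(4)]]) simp
  have inj: "y1 = y2" if "y1 < N" "y2 < N" "[S r y1 = S r y2] (mod int N)" for y1 y2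
  proof (rule ccontr)
    assume ne: "y1 \<noteq> y2"
    have gen: False if a: "a < b" "b < N" "[S r a = S r b] (mod int N)" for a b
    proof -
      have "S r b = S r a + r ^ a * S r (b - a)" using S_add[of r a "b - a"] a by simp
      moreover have "int N dvd S r b - S r a" using a(3) cong_sym cong_iff_dvd_diff by blast
      ultimately have "int N dvd r ^ a * S r (b - a)" by simp
      moreover have "coprime (int N) (r ^ a)" unfolding N_def of_nat_power
        using cop by (simp add: coprime_commute)
      ultimately have "int N dvd S r (b - a)" by (simp add: coprime_dvd_mult_right_iff)
      then have "(int p)^m dvd S r (b - a)" unfolding N_def of_nat_power .
      then have "p^m dvd (b - a)" using key[OF assms(1,2,4)] by blast
      moreover have "0 < b - a" "b - a < p^m" using a N_def by auto
      ultimately show False using nat_dvd_not_less by blast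
    qed
    show False
    proof (cases "y1 < y2")
      case True then show False using gen[of y1 y2] that by blast
    next
      case False then have "y2 < y1" using ne by simp
      then show False using gen[of y2 y1] that cong_sym by blast
    qed
  qed
  define f where "f y = nat (S r y mod int N)" for y
  have fcong: "[S r y = int (f y)] (mod int N)" for y
    using Npos by (simp add: f_def cong_def)
  have finj: "inj_on f {..<N}"
  proof (rule inj_onI)
    fix y1 y2 assume "y1 \<in> {..<N}" "y2 \<in> {..<N}" "f y1 = f y2"
    then have "[S r y1 = S r y2] (mod int N)"
      using fcong[of y1] fcong[of y2] cong_sym cong_trans by metis
    then show "y1 = y2" using inj \<open>y1 \<in> _\<close> \<open>y2 \<in> _\<close> by simp
  qed
  have fsub: "f ` {..<N} \<subseteq> {..<N}"
    using Npos by (auto simp: f_def nat_less_iff)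
  have fsurj: "f ` {..<N} = {..<N}" using endo_inj_surj[OF _ fsub finj] by simp
  show ?thesis unfolding N_def[symmetric]
  proof (intro allI impI)
    fix x assume "x < N"
    then obtain y where y: "y < N" "f y = x" using fsurj by (metis imageE lessThan_iff)
    show "\<exists>!y. y < N \<and> [S r y = int x] (mod int N)"
    proof (rule ex1I[of _ y])
      show "y < N \<and> [S r y = int x] (mod int N)" using y fcong by blast
    next
      fix z assume "z < N \<and> [S r z = int x] (mod int N)"
      then have "[S r z = S r y] (mod int N)"
        using fcong[of y] y(2) cong_sym cong_trans by metis
      then show "z = y" using inj y \<open>z < N \<and> _\<close> by blast
    qed
  qed
qed

end
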